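(* Let $R\in\mathbb R$ and let $f:[0,R)\to\mathbb R$ be continuously differentiable and satisfy (h1) $f(0)>0$, $f'(0)=-1$; (h2) $f'$ is strictly increasing and convex; (h3) $f(t)<0$ for some $t\in(0,R)$. Let $\beta:=\sup_{t\in[0,R)}-f(t)$, $t_*:=\min f^{-1}(\{0\})$, $\bar\tau:=\sup\{t\in[0,R):f(t)<0\}$ and $\bar t:=\sup\{t\in[0,R):f'(t)<0\}$. Then: (i) $f'(t)<0$ for all $t\in[0,\bar t)$, and $f'(t)\ge0$ for all $t\in[0,R)\setminus[0,\bar t)$; (ii) $0<t_*<\bar t\le\bar\tau\le R$; (iii) $\beta=-\lim_{t\to\bar t^-}f(t)$ and $0<\beta<\bar t$. *)

theory Defs
  imports "HOL-Analysis.Analysis"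
begin

end

theory Submission
  imports Defs
begin

theorem proposition2p3:
  fixes f f' :: "real \<Rightarrow> real" and R :: real
  assumes deriv: "\<And>t. t \<in> {0..<R} \<Longrightarrow> (f has_real_derivative f' t) (at t within {0..<R})"
    and cont: "continuous_on {0..<R} f'"
    and h1: "f 0 > 0" "f' 0 = -1"
    and h2: "strict_mono_on {0..<R} f'" "convex_on {0..<R} f'"
    and h3: "\<exists>t\<in>{0<..<R}. f t < 0"
  defines "beta \<equiv> Sup ((\<lambda>t. - f t) ` {0..<R})"
    and "tstar \<equiv> (LEAST t. t \<in> {0..<R} \<and> f t = 0)"
    and "tau \<equiv> Sup {t \<in> {0..<R}. f t < 0}"
    and "tbar \<equiv> Sup {t \<in> {0..<R}. f' t < 0}"
  shows "(\<forall>t\<in>{0..<tbar}. f' t < 0) \<and> (\<forall>t\<in>{0..<R} - {0..<tbar}. f' t \<ge> 0)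
     \<and> (0 < tstar \<and> tstar < tbar \<and> tbar \<le> tau \<and> tau \<le> R)
     \<and> ((f \<longlongrightarrow> - beta) (at_left tbar) \<and> 0 < beta \<and> beta < tbar)"
proof -
  obtain t1 where t1: "0 < t1" "t1 < R" "f t1 < 0" using h3 by auto
  have R0: "0 < R" using t1 by simp
  define S where "S = {t \<in> {0..<R}. f' t < 0}"
  have S0: "0 \<in> S" using R0 h1 by (simp add: S_def)
  have bddS: "bdd_above S" unfolding S_def by (rule bdd_aboveI[of _ R]) auto
  have tbarR: "tbar \<le> R" unfolding tbar_def S_def[symmetric]
    using S0 by (intro cSup_least) (auto simp: S_def)
  have tbar0: "0 \<le> tbar" unfolding tbar_def S_def[symmetric] using S0 bddS by (rule cSup_upper)
  have A1: "f' t < 0" if "0 \<le> t" "t < tbar" for t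
  proof -
    have "t < Sup S" using that(2) by (simp add: tbar_def S_def)
    then obtain s where s: "s \<in> S" "t < s" using less_cSup_iff[of S t] S0 bddS by auto
    have "f' t < f' s" using h2(1) s that by (auto simp: S_def strict_mono_on_def)
    with s show ?thesis by (auto simp: S_def)
  qed
  have A2: "f' t \<ge> 0" if "tbar \<le> t" "t < R" for t
  proof (rule ccontr)
    assume neg: "\<not> f' t \<ge> 0"
    have t0: "t \<in> {0..<R}" using that tbar0 by auto
    obtain d where d: "d > 0" "\<forall>x'\<in>{0..<R}. dist x' t < d \<longrightarrow> dist (f' x') (f' t) < - f' t"
      using cont t0 neg unfolding continuous_on_iff by (metis neg_0_less_iff_less not_le)
    define s where "s = min (t + d/2) ((t + R)/2)"
    have s: "t < s" "s < R" "dist s t < d"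
    proof -
      show "t < s" using d that unfolding s_def by simp
      have "(t + R)/2 < R" using that by simp
      then show "s < R" unfolding s_def by (rule min.strict_coboundedI2)
      have "s \<le> t + d/2" unfolding s_def by simp
      then show "dist s t < d" using \<open>t < s\<close> d by (simp add: dist_real_def)
    qed
    have "f' s < 0" using d(2)[rule_format, of s] s t0 by (auto simp: dist_real_def)
    hence "s \<in> S" using s t0 by (auto simp: S_def)
    hence "s \<le> tbar" unfolding tbar_def S_def[symmetric] using bddS by (rule cSup_upper)
    with s that show False by simp
  qed
  have contf: "continuous_on {0..<R} f"
    using deriv by (intro DERIV_continuous_on) auto
  have dint: "(f has_real_derivative f' x) (at x)" if "0 < x" "x < R" for x
  proof -
    have "(f has_real_derivative f' x) (at x within {0<..<R})"
      using deriv[of x] that by (rule_tac DERIV_subset) auto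
    moreover have "at x within {0<..<R} = at x" by (rule at_within_open) (use that in auto)
    ultimately show ?thesis by simp
  qed
  have C: "f b < f a" if "0 \<le> a" "a < b" "b \<le> tbar" "b < R" for a b
  proof (rule DERIV_neg_imp_decreasing_open[OF \<open>a < b\<close>])
    fix x assume "a < x" "x < b"
    thus "\<exists>y. (f has_real_derivative y) (at x) \<and> y < 0"
      using that by (intro exI[of _ "f' x"]) (auto intro!: dint A1)
  next
    show "continuous_on {a..b} f" using that by (rule_tac continuous_on_subset[OF contf]) auto
  qed
  have D: "f a \<le> f b" if "tbar \<le> a" "a \<le> b" "b < R" for a b
  proof (rule DERIV_nonneg_imp_increasing_open[OF \<open>a \<le> b\<close>])
    fix x assume "a < x" "x < b"
    thus "\<exists>y. (f has_real_derivative y) (at x) \<and> y \<ge> 0"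
      using that tbar0 by (intro exI[of _ "f' x"]) (auto intro!: dint A2)
  next
    show "continuous_on {a..b} f" using that tbar0 by (rule_tac continuous_on_subset[OF contf]) auto
  qed
  have E: "f 0 \<le> f t + t" if "0 \<le> t" "t < R" for t
  proof (cases "t = 0")
    case True thus ?thesis by simp
  next
    case False
    have "f 0 + 0 \<le> f t + t"
    proof (rule DERIV_nonneg_imp_increasing_open[of 0 t "\<lambda>x. f x + x"])
      show "0 \<le> t" by fact
      fix x assume x: "0 < x" "x < t"
      have "f' 0 < f' x" using h2(1) x that by (auto simp: strict_mono_on_def)
      thus "\<exists>y. ((\<lambda>x. f x + x) has_real_derivative y) (at x) \<and> y \<ge> 0"
        using x that h1 by (intro exI[of _ "f' x + 1"]) (auto intro!: derivative_eq_intros dint)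
    next
      show "continuous_on {0..t} (\<lambda>x. f x + x)" using that
        by (intro continuous_intros continuous_on_subset[OF contf]) auto
    qed
    thus ?thesis by simp
  qed
  define c where "c = min t1 tbar"
  have c: "0 < c" "c \<le> tbar" "c < R" "f c < 0"
  proof -
    show "c \<le> tbar" "c < R" using t1 tbarR by (auto simp: c_def)
    show "f c < 0"
    proof (cases "t1 < tbar")
      case True thus ?thesis using t1 by (simp add: c_def)
    next
      case False
      hence "f tbar \<le> f t1" using D[of tbar t1] t1 by simp
      thus ?thesis using t1 False by (simp add: c_def)
    qed
    show "0 < c"
    proof (rule ccontr)
      assume "\<not> 0 < c"
      hence "c = 0" using t1 tbar0 by (auto simp: c_def)
      thus False using \<open>f c < 0\<close> h1 by simp
    qed
  qed
  obtain z where z: "0 \<le> z" "z \<le> c" "f z = 0"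
    using IVT2'[of f c 0 0] c h1 contf by (force intro: continuous_on_subset[OF contf])
  have z2: "0 < z" "z < c" using z c h1 by (auto simp: order.order_iff_strict)
  have tstar: "tstar = z" unfolding tstar_def
  proof (rule Least_equality)
    show "z \<in> {0..<R} \<and> f z = 0" using z z2 c by auto
    fix y assume y: "y \<in> {0..<R} \<and> f y = 0"
    show "z \<le> y"
    proof (rule ccontr)
      assume "\<not> z \<le> y"
      hence "f z < f y" using C[of y z] y z2 c by auto
      with y z show False by simp
    qed
  qed
  define T where "T = {t \<in> {0..<R}. f t < 0}"
  have bddT: "bdd_above T" unfolding T_def by (rule bdd_aboveI[of _ R]) auto
  have T1: "t1 \<in> T" using t1 by (auto simp: T_def)
  have tauR: "tau \<le> R" unfolding tau_def T_def[symmetric]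
    using T1 by (intro cSup_least) (auto simp: T_def)
  have tbartau: "tbar \<le> tau"
  proof (rule dense_le_bounded[of z])
    show "z < tbar" using z2 c by simp
    fix w assume w: "z < w" "w < tbar"
    have "f w < f z" using C[of z w] w z2 tbarR by auto
    hence "w \<in> T" using w z2 tbarR by (auto simp: T_def z)
    thus "w \<le> tau" unfolding tau_def T_def[symmetric] using bddT by (rule cSup_upper)
  qed
  define B where "B = (\<lambda>t. - f t) ` {0..<R}"
  have bddB: "bdd_above B" unfolding B_def
    using E by (intro bdd_aboveI[of _ "R - f 0"]) force
  have Bup: "- f t \<le> beta" if "0 \<le> t" "t < R" for t
    unfolding beta_def B_def[symmetric] using bddB that by (intro cSup_upper) (auto simp: B_def)
  have beta0: "0 < beta" using Bup[of t1] t1 by simp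
  have main: "(f \<longlongrightarrow> - beta) (at_left tbar) \<and> beta < tbar"
  proof (cases "tbar < R")
    case True
    have fmin: "f tbar \<le> f t" if "0 \<le> t" "t < R" for t
    proof (cases "t < tbar")
      case True thus ?thesis using C[of t tbar] that \<open>tbar < R\<close> by simp
    next
      case False thus ?thesis using D[of tbar t] that by simp
    qed
    have beq: "beta = - f tbar" unfolding beta_def B_def[symmetric]
    proof (rule antisym)
      show "Sup B \<le> - f tbar" unfolding B_def using R0 fmin by (intro cSup_least) auto
      show "- f tbar \<le> Sup B" using Bup[of tbar] True tbar0 unfolding beta_def B_def by simp
    qed
    have "(f \<longlongrightarrow> f tbar) (at tbar within {0..<R})"
      using contf True tbar0 by (simp add: continuous_on_def)
    hence l1: "(f \<longlongrightarrow> f tbar) (at tbar within {0<..<tbar})"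
      by (rule tendsto_within_subset) (use True in auto)
    have "at tbar within {0<..<tbar} = at_left tbar"
      by (rule at_within_nhd[of _ "{0<..}"]) (use z2 c in auto)
    with l1 have "(f \<longlongrightarrow> f tbar) (at_left tbar)" by simp
    moreover have "beta < tbar" using beq E[of tbar] True tbar0 h1 by simp
    ultimately show ?thesis using beq by simp
  next
    case False
    hence tR: "tbar = R" using tbarR by simp
    have "Sup B \<le> R - f 0"
    proof (rule cSup_least)
      show "B \<noteq> {}" using R0 by (auto simp: B_def)
      fix x assume "x \<in> B"
      then obtain t where "0 \<le> t" "t < R" "x = - f t" by (auto simp: B_def)
      then show "x \<le> R - f 0" using E[of t] by linarith
    qed
    hence bR: "beta \<le> R - f 0" by (simp add: beta_def B_def)
    have "(f \<longlongrightarrow> - beta) (at_left tbar)"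
    proof (rule tendstoI)
      fix e :: real assume e: "e > 0"
      have "\<exists>x\<in>B. beta - e < x" unfolding beta_def B_def[symmetric]
        using bddB e by (intro less_cSupD) (auto simp: B_def R0)
      then obtain s where s: "0 \<le> s" "s < R" "beta - e < - f s" by (auto simp: B_def)
      show "\<forall>\<^sub>F x in at_left tbar. dist (f x) (- beta) < e"
        unfolding eventually_at_left_field
      proof (intro exI[of _ s] conjI allI impI)
        show "s < tbar" using s tR by simp
        fix y assume y: "s < y" "y < tbar"
        have "f y < f s" using C[of s y] y s tR by simp
        moreover have "- f y \<le> beta" using Bup[of y] y s tR by simp
        ultimately show "dist (f y) (- beta) < e" using s by (simp add: dist_real_def)
      qed
    qed
    moreover have "beta < tbar" using bR h1 tR by simp
    ultimately show ?thesis by simp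
  qed
  have i1: "\<forall>t\<in>{0..<tbar}. f' t < 0" using A1 by simp
  have i2: "\<forall>t\<in>{0..<R} - {0..<tbar}. f' t \<ge> 0"
  proof
    fix t assume "t \<in> {0..<R} - {0..<tbar}"
    hence "tbar \<le> t" "t < R" by auto
    thus "f' t \<ge> 0" by (rule A2)
  qed
  have ii: "0 < tstar \<and> tstar < tbar \<and> tbar \<le> tau \<and> tau \<le> R"
    using tstar z2 c tbartau tauR by simp
  show ?thesis using i1 i2 ii main beta0 by blast
qed

end
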